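(* Let $A,B,C$ be real constants and, for a metric $g$ on an $n$-dimensional spacetime, set $$F = A\,R^{\alpha\beta\gamma\delta}R_{\alpha\beta\gamma\delta}+B\,R^{\alpha\beta}R_{\alpha\beta}+C\,R^{2},\qquad H^{\mu\nu}=\frac{1}{n-4}\,\frac{1}{\sqrt{|g|}}\,\frac{\delta}{\delta g_{\mu\nu}}\int F\sqrt{|g|}\,d^{n}x .$$ Suppose that, for every static spherically symmetric (SSS) metric $$ds^{2}=e^{\nu(r)}dt^{2}-e^{\lambda(r)}dr^{2}-r^{2}\,d\Omega^{2}_{n-2},$$ the quantity $H^{\mu\nu}$ has a finite limit as $n\to 4$. Then $(A,B,C)$ is proportional to the Gauss–Bonnet combination $(1,-4,1)$, i.e. $B=-4C$ and $A=C$; equivalently, $F$ is a multiple of $GB=R^{\alpha\beta\gamma\delta}R_{\alpha\beta\gamma\delta}-4R^{\alpha\beta}R_{\alpha\beta}+R^{2}$.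
   Context: This arises in the dimensional-regularization treatment of one-loop quantum corrections to gravity: the quantum correction term is $H^{\mu\nu}$ as defined, with $n$ regarded as a continuous dimension parameter near $4$. Writing $F\sqrt{|g|}$ evaluated on the SSS metric as $f_0+(n-4)f_1+O((n-4)^2)$, finiteness as $n\to4$ means the variational derivative (Euler–Lagrange expression with respect to $\nu$ and $\lambda$, total derivatives discarded) of the $O((n-4)^0)$ part vanishes. In the SSS metric, $\nu$ and $\lambda$ are arbitrary smooth functions of the radial coordinate $r$ and $d\Omega^2_{n-2}$ is the line element of the unit $(n-2)$-sphere; signature $(+,-,\dots,-)$. *)

theory Defs
  imports "HOL-Analysis.Analysis"
begin

text \<open>Curvature of the 4-dimensional static spherically symmetric (SSS) metric
  ds^2 = e^nu dt^2 - e^lam dr^2 - r^2 dOmega_2^2, expressed through the radial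
  jet (r, nu, nu', nu'', lam, lam', lam'').  In the orthonormal frame the Riemann
  tensor is pair-diagonal with mixed components
  R^{tr}_{tr} = K1, R^{t theta}_{t theta} = R^{t phi}_{t phi} = K2,
  R^{r theta}_{r theta} = R^{r phi}_{r phi} = K3, R^{theta phi}_{theta phi} = K4.\<close>

definition K1 :: "real \<Rightarrow> real \<Rightarrow> real \<Rightarrow> real \<Rightarrow> real \<Rightarrow> real \<Rightarrow> real" where
  "K1 r n1 n2 l0 l1 l2 = exp (- l0) * (n2 / 2 + n1^2 / 4 - n1 * l1 / 4)"
definition K2 :: "real \<Rightarrow> real \<Rightarrow> real \<Rightarrow> real" where
  "K2 r n1 l0 = exp (- l0) * n1 / (2 * r)"
definition K3 :: "real \<Rightarrow> real \<Rightarrow> real \<Rightarrow> real" where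
  "K3 r l0 l1 = - exp (- l0) * l1 / (2 * r)"
definition K4 :: "real \<Rightarrow> real \<Rightarrow> real" where
  "K4 r l0 = (exp (- l0) - 1) / r^2"

definition Riem_sq :: "real \<Rightarrow> real \<Rightarrow> real \<Rightarrow> real \<Rightarrow> real \<Rightarrow> real \<Rightarrow> real \<Rightarrow> real" where
  "Riem_sq r n0 n1 n2 l0 l1 l2 =
     4 * ((K1 r n1 n2 l0 l1 l2)^2 + 2 * (K2 r n1 l0)^2 + 2 * (K3 r l0 l1)^2 + (K4 r l0)^2)"
definition Ric_sq :: "real \<Rightarrow> real \<Rightarrow> real \<Rightarrow> real \<Rightarrow> real \<Rightarrow> real \<Rightarrow> real \<Rightarrow> real" where
  "Ric_sq r n0 n1 n2 l0 l1 l2 =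
     (K1 r n1 n2 l0 l1 l2 + 2 * K2 r n1 l0)^2 + (K1 r n1 n2 l0 l1 l2 + 2 * K3 r l0 l1)^2
     + 2 * (K2 r n1 l0 + K3 r l0 l1 + K4 r l0)^2"
definition Rscal :: "real \<Rightarrow> real \<Rightarrow> real \<Rightarrow> real \<Rightarrow> real \<Rightarrow> real \<Rightarrow> real \<Rightarrow> real" where
  "Rscal r n0 n1 n2 l0 l1 l2 =
     2 * (K1 r n1 n2 l0 l1 l2 + 2 * K2 r n1 l0 + 2 * K3 r l0 l1 + K4 r l0)"

text \<open>The order-(n-4)^0 part f0 of F sqrt|g| on the SSS metric, i.e. its value at n = 4,
  with the constant angular factor sin theta omitted (it does not affect the
  vanishing of the Euler--Lagrange expressions w.r.t. nu(r), lam(r)).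
  sqrt|g| = e^{(nu+lam)/2} r^2 (times sin theta).\<close>
definition f0 :: "real \<Rightarrow> real \<Rightarrow> real \<Rightarrow> real \<Rightarrow> real \<Rightarrow> real \<Rightarrow> real \<Rightarrow> real \<Rightarrow> real \<Rightarrow> real \<Rightarrow> real" where
  "f0 A B C r n0 n1 n2 l0 l1 l2 =
     (A * Riem_sq r n0 n1 n2 l0 l1 l2 + B * Ric_sq r n0 n1 n2 l0 l1 l2
      + C * (Rscal r n0 n1 n2 l0 l1 l2)^2) * exp ((n0 + l0) / 2) * r^2"

definition smooth_pos :: "(real \<Rightarrow> real) \<Rightarrow> bool" where
  "smooth_pos f \<longleftrightarrow> (\<forall>k. \<forall>x>0. ((deriv ^^ k) f) differentiable (at x))"

definition EL_nu :: "real \<Rightarrow> real \<Rightarrow> real \<Rightarrow> (real \<Rightarrow> real) \<Rightarrow> (real \<Rightarrow> real) \<Rightarrow> real \<Rightarrow> real" where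
  "EL_nu A B C nu lam r =
     deriv (\<lambda>x. f0 A B C r x (deriv nu r) (deriv (deriv nu) r)
                    (lam r) (deriv lam r) (deriv (deriv lam) r)) (nu r)
   - deriv (\<lambda>s. deriv (\<lambda>x. f0 A B C s (nu s) x (deriv (deriv nu) s)
                    (lam s) (deriv lam s) (deriv (deriv lam) s)) (deriv nu s)) r
   + deriv (deriv (\<lambda>s. deriv (\<lambda>x. f0 A B C s (nu s) (deriv nu s) x
                    (lam s) (deriv lam s) (deriv (deriv lam) s)) (deriv (deriv nu) s))) r"

definition EL_lam :: "real \<Rightarrow> real \<Rightarrow> real \<Rightarrow> (real \<Rightarrow> real) \<Rightarrow> (real \<Rightarrow> real) \<Rightarrow> real \<Rightarrow> real" where
  "EL_lam A B C nu lam r =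
     deriv (\<lambda>x. f0 A B C r (nu r) (deriv nu r) (deriv (deriv nu) r)
                    x (deriv lam r) (deriv (deriv lam) r)) (lam r)
   - deriv (\<lambda>s. deriv (\<lambda>x. f0 A B C s (nu s) (deriv nu s) (deriv (deriv nu) s)
                    (lam s) x (deriv (deriv lam) s)) (deriv lam s)) r
   + deriv (deriv (\<lambda>s. deriv (\<lambda>x. f0 A B C s (nu s) (deriv nu s) (deriv (deriv nu) s)
                    (lam s) (deriv lam s) x) (deriv (deriv lam) s))) r"

end

theory Submission imports Defs begin

lemmas defs = f0_def Riem_sq_def Ric_sq_def Rscal_def K1_def K2_def K3_def K4_def

lemma t1:
  assumes s: "r \<noteq> 0"
  shows "deriv (\<lambda>x. f0 A B C r x 0 0 l 0 0) 0 =
     (2*A+B+2*C) * (exp (-l) - 1)^2 * exp (l/2) / r^2"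
proof -
  have "((\<lambda>x. f0 A B C r x 0 0 l 0 0) has_real_derivative
     (2*A+B+2*C) * (exp (-l) - 1)^2 * exp (l/2) / r^2) (at 0)"
    unfolding defs
    apply simp
    apply (rule derivative_eq_intros refl | simp add: s)+
    using s apply (simp add: field_simps power2_eq_square)
    done
  then show ?thesis by (rule DERIV_imp_deriv)
qed

lemma t2:
  assumes s: "s \<noteq> 0"
  shows "deriv (\<lambda>x. f0 A B C s 0 x 0 l 0 0) 0 =
     (2*B+8*C) * exp (-l) * (exp (-l) - 1) * exp (l/2) / s"
proof -
  have "((\<lambda>x. f0 A B C s 0 x 0 l 0 0) has_real_derivative
     (2*B+8*C) * exp (-l) * (exp (-l) - 1) * exp (l/2) / s) (at 0)"
    unfolding defs
    apply simp
    apply (rule derivative_eq_intros refl | simp add: s)+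
    using s apply (simp add: field_simps power2_eq_square)
    done
  then show ?thesis by (rule DERIV_imp_deriv)
qed

lemma t3:
  assumes s: "s \<noteq> 0"
  shows "deriv (\<lambda>x. f0 A B C s 0 0 x l 0 0) 0 =
     4*C * exp (-l) * (exp (-l) - 1) * exp (l/2)"
proof -
  have "((\<lambda>x. f0 A B C s 0 0 x l 0 0) has_real_derivative
     4*C * exp (-l) * (exp (-l) - 1) * exp (l/2)) (at 0)"
    unfolding defs
    apply simp
    apply (rule derivative_eq_intros refl | simp add: s)+
    done
  then show ?thesis by (rule DERIV_imp_deriv)
qed

lemma deriv_const_fun: "deriv (\<lambda>_. c::real) = (\<lambda>_. 0)"
  by (rule ext) simp

lemma smooth_const: "smooth_pos (\<lambda>_. c)"
proof -
  have "\<exists>d. (deriv ^^ k) (\<lambda>_. c::real) = (\<lambda>_. d)" for k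
    by (induction k) (auto simp: deriv_const_fun)
  then show ?thesis unfolding smooth_pos_def
    by (metis differentiable_const)
qed

lemma ev_pos: "(r::real) > 0 \<Longrightarrow> eventually (\<lambda>s. s > 0) (nhds r)"
proof -
  assume r: "r > 0"
  have "eventually (\<lambda>s. s \<in> {0<..}) (nhds r)"
    by (rule eventually_nhds_in_open) (use r in auto)
  then show ?thesis by simp
qed

lemma EL_test:
  assumes r: "r > 0"
  shows "EL_nu A B C (\<lambda>_. 0) (\<lambda>_. l) r =
    exp (l/2) / r^2 * ((2*A+B+2*C) * (exp (-l) - 1)^2
       + (2*B+8*C) * exp (-l) * (exp (-l) - 1))"
proof -
  define G where "G = (2*B+8*C) * exp (-l) * (exp (-l) - 1) * exp (l/2)"
  define H where "H = 4*C * exp (-l) * (exp (-l) - 1) * exp (l/2)"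
  have e2: "deriv (\<lambda>s. deriv (\<lambda>x. f0 A B C s 0 x 0 l 0 0) 0) r = deriv (\<lambda>s. G / s) r"
    apply (rule deriv_cong_ev[OF _ refl])
    using ev_pos[OF r] by eventually_elim (simp add: t2 G_def)
  have "((\<lambda>s. G / s) has_real_derivative (- G / r^2)) (at r)"
    using r by (auto intro!: derivative_eq_intros simp: power2_eq_square)
  then have e2': "deriv (\<lambda>s. G / s) r = - G / r^2" by (rule DERIV_imp_deriv)
  have d3: "eventually (\<lambda>s. deriv (\<lambda>s. deriv (\<lambda>x. f0 A B C s 0 0 x l 0 0) 0) s = 0) (nhds r)"
    using ev_pos[OF r]
  proof eventually_elim
    case (elim s)
    have "deriv (\<lambda>s. deriv (\<lambda>x. f0 A B C s 0 0 x l 0 0) 0) s = deriv (\<lambda>_. H) s"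
      apply (rule deriv_cong_ev[OF _ refl])
      using ev_pos[OF elim] by eventually_elim (simp add: t3 H_def)
    then show ?case by simp
  qed
  have e3: "deriv (deriv (\<lambda>s. deriv (\<lambda>x. f0 A B C s 0 0 x l 0 0) 0)) r = deriv (\<lambda>_. 0) r"
    by (rule deriv_cong_ev[OF d3 refl])
  show ?thesis
    unfolding EL_nu_def deriv_const_fun
    using r by (simp add: t1 e2 e2' e3 G_def field_simps power2_eq_square)
qed

theorem theorem2:
  fixes A B C :: real
  assumes finite_limit:
    "\<forall>nu lam. smooth_pos nu \<and> smooth_pos lam \<longrightarrow>
        (\<forall>r>0. EL_nu A B C nu lam r = 0 \<and> EL_lam A B C nu lam r = 0)"
  shows "B = -4 * C \<and> A = C"
proof -
  have z: "(2*A+B+2*C) * (exp (-l) - 1)^2 + (2*B+8*C) * exp (-l) * (exp (-l) - 1) = 0" for l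
  proof -
    have "EL_nu A B C (\<lambda>_. 0) (\<lambda>_. l) 1 = 0"
      using finite_limit smooth_const by auto
    then show ?thesis using EL_test[of 1 A B C l] by simp
  qed
  have a: "exp (- ln 2) = (1/2::real)" by (simp add: exp_minus)
  have b: "exp (- (- ln 2)) = (2::real)" by simp
  from z[of "ln 2"] z[of "- ln 2"] have
    "(2*A+B+2*C) * (1/4) + (2*B+8*C) * (1/2) * (-1/2) = 0"
    "(2*A+B+2*C) + (2*B+8*C) * 2 = 0"
    unfolding a b by (simp_all add: power2_eq_square)
  then have "2*A + B + 2*C = 2*B + 8*C" "2*A + 5*B + 18*C = 0" by (simp_all add: algebra_simps)
  then show ?thesis by linarith
qed
end
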